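(* For $m\ge 1$, let $\mathbf{D}_m$ be the $m\times m$ symmetric tridiagonal matrix with diagonal entries $d_{kk}=4k^2-6k+\tfrac52$ ($1\le k\le m$), off-diagonal entries $d_{k,k+1}=d_{k+1,k}=-k(2k-1)$ ($1\le k\le m-1$), and all other entries zero. Then for every $m\in\mathbb{N}$ its smallest eigenvalue satisfies $$\lambda_{\min}(\mathbf{D}_m)<\frac{1}{\ln\big(m+\frac12\big)}.$$ *)

theory Defs
  imports Complex_Main "Jordan_Normal_Form.Char_Poly"
begin

text \<open>The m x m symmetric tridiagonal matrix D_m. Jordan_Normal_Form matrices are 0-indexed,
  so row/column i corresponds to the paper's index k = i + 1.\<close>
definition Dmat :: "nat \<Rightarrow> real mat" where
  "Dmat m = mat m m (\<lambda>(i, j).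
     let k = real (i + 1) in
     if i = j then 4 * k^2 - 6 * k + 5/2
     else if j = i + 1 then - k * (2 * k - 1)
     else if i = j + 1 then - real (j + 1) * (2 * real (j + 1) - 1)
     else 0)"

definition lambda_min :: "real mat \<Rightarrow> real" where
  "lambda_min A = Min {l. eigenvalue A l}"

end

theory Submission
  imports Defs
begin

definition qf :: "nat \<Rightarrow> (nat \<Rightarrow> nat \<Rightarrow> real) \<Rightarrow> (nat \<Rightarrow> real) \<Rightarrow> real" where
  "qf n b v = (\<Sum>i<n. \<Sum>j<n. b i j * v i * v j)"

definition nv :: "nat \<Rightarrow> (nat \<Rightarrow> real) \<Rightarrow> real" where
  "nv n v = (\<Sum>i<n. (v i)^2)"

lemma nv_nonneg: "nv n v \<ge> 0"
  unfolding nv_def by (intro sum_nonneg) auto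

lemma sq_le_nv: "i < n \<Longrightarrow> (v i)^2 \<le> nv n v"
  unfolding nv_def by (rule member_le_sum) auto

lemma abs_le_sqrt_nv: "i < n \<Longrightarrow> \<bar>v i\<bar> \<le> sqrt (nv n v)"
  using sq_le_nv[of i n v] real_sqrt_le_mono by fastforce

lemma prod_le_nv: assumes "i < n" "j < n" shows "\<bar>v i * v j\<bar> \<le> nv n v"
proof -
  have "\<bar>v i * v j\<bar> \<le> sqrt (nv n v) * sqrt (nv n v)"
    unfolding abs_mult by (intro mult_mono abs_le_sqrt_nv assms) (auto simp: nv_nonneg)
  also have "\<dots> = nv n v" using nv_nonneg by simp
  finally show ?thesis .
qed

lemma qf_bound: "\<bar>qf n b v\<bar> \<le> (\<Sum>i<n. \<Sum>j<n. \<bar>b i j\<bar>) * nv n v"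
proof -
  have "\<bar>qf n b v\<bar> \<le> (\<Sum>i<n. \<Sum>j<n. \<bar>b i j * v i * v j\<bar>)"
    unfolding qf_def by (rule order_trans[OF sum_abs sum_mono]) (rule sum_abs)
  also have "\<dots> \<le> (\<Sum>i<n. \<Sum>j<n. \<bar>b i j\<bar> * nv n v)"
    by (intro sum_mono) (auto simp: abs_mult mult.assoc intro!: mult_left_mono prod_le_nv[unfolded abs_mult])
  also have "\<dots> = (\<Sum>i<n. \<Sum>j<n. \<bar>b i j\<bar>) * nv n v"
    by (simp add: sum_distrib_right)
  finally show ?thesis .
qed

lemma nv_zero: assumes "nv n v = 0" shows "qf n b v = 0"
proof -
  have "\<forall>i<n. v i = 0" using sq_le_nv[of _ n v] assms nv_nonneg by (metis le_zero_eq power_zero_numeral zero_less_power2 not_le zero_eq_power2)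
  thus ?thesis unfolding qf_def by simp
qed

lemma lin_bound:
  "(\<Sum>j<n. g j * y j)^2 \<le> (\<Sum>j<n. \<bar>g j\<bar>)^2 * nv n y"
proof -
  have "\<bar>\<Sum>j<n. g j * y j\<bar> \<le> (\<Sum>j<n. \<bar>g j\<bar> * sqrt (nv n y))"
    by (rule order_trans[OF sum_abs sum_mono]) (auto simp: abs_mult intro!: mult_left_mono abs_le_sqrt_nv)
  also have "\<dots> = (\<Sum>j<n. \<bar>g j\<bar>) * sqrt (nv n y)" by (simp add: sum_distrib_right)
  finally have h: "\<bar>\<Sum>j<n. g j * y j\<bar> \<le> (\<Sum>j<n. \<bar>g j\<bar>) * sqrt (nv n y)" .
  have "(\<Sum>j<n. g j * y j)^2 = \<bar>\<Sum>j<n. g j * y j\<bar>^2" by simp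
  also have "\<dots> \<le> ((\<Sum>j<n. \<bar>g j\<bar>) * sqrt (nv n y))^2"
    by (rule power_mono[OF h]) simp
  also have "\<dots> = (\<Sum>j<n. \<bar>g j\<bar>)^2 * nv n y" using nv_nonneg by (simp add: power_mult_distrib)
  finally show ?thesis .
qed

lemma bilin_y:
  assumes "\<And>i. i < n \<Longrightarrow> y i = (\<Sum>k<n. b i k * v k)"
  shows "(\<Sum>i<n. \<Sum>j<n. b i j * y i * v j) = nv n y"
proof -
  have "(\<Sum>i<n. \<Sum>j<n. b i j * y i * v j) = (\<Sum>i<n. y i * (\<Sum>j<n. b i j * v j))"
    by (simp add: sum_distrib_left mult_ac)
  also have "\<dots> = (\<Sum>i<n. y i * y i)" using assms by simp
  finally show ?thesis unfolding nv_def by (simp add: power2_eq_square)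
qed

lemma bilin_y2:
  assumes sym: "\<And>i j. i < n \<Longrightarrow> j < n \<Longrightarrow> b i j = b j i"
  and "\<And>i. i < n \<Longrightarrow> y i = (\<Sum>k<n. b i k * v k)"
  shows "(\<Sum>i<n. \<Sum>j<n. b i j * v i * y j) = nv n y"
proof -
  have "(\<Sum>i<n. \<Sum>j<n. b i j * v i * y j) = (\<Sum>j<n. \<Sum>i<n. b i j * v i * y j)"
    by (rule sum.swap)
  also have "\<dots> = (\<Sum>j<n. \<Sum>i<n. b j i * y j * v i)"
    by (intro sum.cong refl) (simp add: sym mult_ac)
  also have "\<dots> = nv n y" by (rule bilin_y) (use assms in auto)
  finally show ?thesis .
qed

lemma qf_expand:
  "qf n b (\<lambda>i. v i - a * y i) = qf n b v - a * (\<Sum>i<n. \<Sum>j<n. b i j * v i * y j)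
      - a * (\<Sum>i<n. \<Sum>j<n. b i j * y i * v j) + a^2 * qf n b y"
  unfolding qf_def
  by (simp add: sum_distrib_left sum_subtractf sum.distrib algebra_simps power2_eq_square)

lemma coercive:
  assumes sym: "\<And>i j. i < n \<Longrightarrow> j < n \<Longrightarrow> b i j = b j i"
  and psd: "\<And>v. qf n b v \<ge> 0"
  and rec: "\<And>v i. i < n \<Longrightarrow> v i = (\<Sum>j<n. g i j * (\<Sum>k<n. b j k * v k))"
  shows "\<exists>e>0. \<forall>v. qf n b v \<ge> e * nv n v"
proof -
  define K where "K = 1 + (\<Sum>i<n. \<Sum>j<n. \<bar>b i j\<bar>)"
  define G where "G = 1 + (\<Sum>i<n. (\<Sum>j<n. \<bar>g i j\<bar>)^2)"
  have K0: "K > 0" unfolding K_def by (smt (verit) sum_nonneg abs_ge_zero)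
  have G0: "G > 0" unfolding G_def by (smt (verit) sum_nonneg zero_le_power2)
  have main: "qf n b v \<ge> (1 / (K * G)) * nv n v" for v
  proof -
    define y where "y j = (\<Sum>k<n. b j k * v k)" for j
    have "nv n v = (\<Sum>i<n. (\<Sum>j<n. g i j * y j)^2)"
      unfolding nv_def y_def by (intro sum.cong refl) (subst rec, auto)
    also have "\<dots> \<le> (\<Sum>i<n. (\<Sum>j<n. \<bar>g i j\<bar>)^2 * nv n y)"
      by (intro sum_mono lin_bound)
    also have "\<dots> = (G - 1) * nv n y" unfolding G_def by (simp add: sum_distrib_right)
    also have "\<dots> \<le> G * nv n y" using nv_nonneg[of n y] by (simp add: algebra_simps)
    finally have vy: "nv n v \<le> G * nv n y" .
    have qy: "qf n b y \<le> K * nv n y"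
      using qf_bound[of n b y] nv_nonneg[of n y] unfolding K_def by (simp add: algebra_simps)
    have "0 \<le> qf n b (\<lambda>i. v i - (1/K) * y i)" by (rule psd)
    also have "\<dots> = qf n b v - 2 * (1/K) * nv n y + (1/K)^2 * qf n b y"
      unfolding qf_expand by (subst bilin_y, simp add: y_def, subst bilin_y2, rule sym, auto simp: y_def)
    also have "\<dots> \<le> qf n b v - 2 * (1/K) * nv n y + (1/K)^2 * (K * nv n y)"
      by (intro add_left_mono mult_left_mono qy) auto
    also have "\<dots> = qf n b v - (1/K) * nv n y" using K0 by (simp add: power2_eq_square field_simps)
    finally have "(1/K) * nv n y \<le> qf n b v" by simp
    moreover have "(1 / (K * G)) * nv n v \<le> (1/K) * nv n y"
      using vy K0 G0 by (simp add: field_simps)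
    ultimately show ?thesis by linarith
  qed
  show ?thesis using main K0 G0 by (intro exI[of _ "1/(K*G)"]) auto
qed

lemma qf_shift:
  "qf n (\<lambda>i j. a i j - (if i = j then t else 0)) v = qf n a v - t * nv n v"
proof -
  have "qf n (\<lambda>i j. a i j - (if i = j then t else 0)) v
     = qf n a v - (\<Sum>i<n. \<Sum>j<n. (if i = j then t else 0) * v i * v j)"
    unfolding qf_def by (simp add: sum_subtractf algebra_simps)
  also have "(\<Sum>i<n. \<Sum>j<n. (if i = j then t else 0) * v i * v j) = (\<Sum>i<n. t * (v i)^2)"
    by (intro sum.cong refl) (simp add: if_distrib[of "\<lambda>x. x * _"] power2_eq_square cong: if_cong)
  finally show ?thesis unfolding nv_def by (simp add: sum_distrib_left)
qed

lemma exists_eig_below: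
  fixes A :: "real mat"
  assumes A: "A \<in> carrier_mat n n"
  and sym: "\<And>i j. i < n \<Longrightarrow> j < n \<Longrightarrow> A $$ (i,j) = A $$ (j,i)"
  and x: "qf n (\<lambda>i j. A $$ (i,j)) x < c * nv n x"
  shows "\<exists>t<c. eigenvalue A t"
proof -
  define a where "a = (\<lambda>i j. A $$ (i,j))"
  define K where "K = (\<Sum>i<n. \<Sum>j<n. \<bar>a i j\<bar>)"
  define T where "T = {qf n a v / nv n v | v. nv n v > 0}"
  have xpos: "nv n x > 0"
  proof (rule ccontr)
    assume "\<not> ?thesis"
    hence x0: "nv n x = 0" using nv_nonneg[of n x] by simp
    with nv_zero[OF x0] x show False unfolding a_def by simp
  qed
  have xT: "qf n a x / nv n x \<in> T" unfolding T_def using xpos by auto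
  have lb: "- K \<le> r" if "r \<in> T" for r
  proof -
    from that obtain v where r: "r = qf n a v / nv n v" and v: "nv n v > 0" unfolding T_def by auto
    have "- K * nv n v \<le> qf n a v" using qf_bound[of n a v] unfolding K_def by simp
    thus ?thesis unfolding r using v by (simp add: field_simps)
  qed
  have bdd: "bdd_below T" by (rule bdd_belowI[of _ "- K"]) (rule lb)
  define t where "t = Inf T"
  have tc: "t < c"
  proof -
    have "t \<le> qf n a x / nv n x" unfolding t_def by (rule cInf_lower[OF xT bdd])
    also have "\<dots> < c" using x xpos unfolding a_def by (simp add: field_simps)
    finally show ?thesis .
  qed
  have psd0: "qf n a v - t * nv n v \<ge> 0" for v
  proof (cases "nv n v > 0")
    case True
    hence "t \<le> qf n a v / nv n v" unfolding t_def by (intro cInf_lower bdd) (auto simp: T_def)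
    thus ?thesis using True by (simp add: field_simps)
  next
    case False
    hence v0: "nv n v = 0" using nv_nonneg[of n v] by simp
    show ?thesis using nv_zero[OF v0] v0 by simp
  qed
  define B where "B = char_matrix A t"
  have B: "B \<in> carrier_mat n n" unfolding B_def using A by simp
  have Bij: "B $$ (i,j) = a i j - (if i = j then t else 0)" if "i < n" "j < n" for i j
    unfolding B_def char_matrix_def a_def using A that by auto
  show ?thesis
  proof (cases "det B = 0")
    case True
    hence "eigenvalue A t" using eigenvalue_det[OF A] unfolding B_def by simp
    thus ?thesis using tc by blast
  next
    case False
    define b where "b = (\<lambda>i j. a i j - (if i = j then t else (0::real)))"
    define C where "C = adj_mat B"
    have C: "C \<in> carrier_mat n n" and CB: "C * B = det B \<cdot>\<^sub>m 1\<^sub>m n"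
      using adj_mat[OF B] unfolding C_def by auto
    define g where "g = (\<lambda>i j. C $$ (i,j) / det B)"
    have gb: "(\<Sum>j<n. g i j * b j k) = (if i = k then 1 else 0)" if "i < n" "k < n" for i k
    proof -
      have "(C * B) $$ (i,k) = (\<Sum>j<n. C $$ (i,j) * B $$ (j,k))"
        using C B that by (simp add: index_mult_mat scalar_prod_def lessThan_atLeast0 row_def col_def)
      also have "\<dots> = (\<Sum>j<n. C $$ (i,j) * b j k)"
        by (intro sum.cong refl) (simp add: Bij that b_def)
      finally have "(\<Sum>j<n. C $$ (i,j) * b j k) = det B * (if i = k then 1 else 0)"
        using CB that by simp
      thus ?thesis unfolding g_def using False
        by (simp add: sum_divide_distrib[symmetric] mult.commute)
    qed
    have rec: "v i = (\<Sum>j<n. g i j * (\<Sum>k<n. b j k * v k))" if "i < n" for v i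
    proof -
      have "(\<Sum>j<n. g i j * (\<Sum>k<n. b j k * v k)) = (\<Sum>j<n. \<Sum>k<n. g i j * b j k * v k)"
        by (simp add: sum_distrib_left mult_ac)
      also have "\<dots> = (\<Sum>k<n. \<Sum>j<n. g i j * b j k * v k)" by (rule sum.swap)
      also have "\<dots> = (\<Sum>k<n. (\<Sum>j<n. g i j * b j k) * v k)"
        by (simp add: sum_distrib_right)
      also have "\<dots> = (\<Sum>k<n. (if i = k then v k else 0))"
        by (intro sum.cong refl) (simp add: gb that)
      also have "\<dots> = v i" using that by simp
      finally show ?thesis by simp
    qed
    have bsym: "b i j = b j i" if "i < n" "j < n" for i j
      using sym[OF that] unfolding b_def a_def by auto
    have psd: "qf n b v \<ge> 0" for v
      unfolding b_def qf_shift using psd0 by simp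
    obtain e where e: "e > 0" and eb: "\<And>v. qf n b v \<ge> e * nv n v"
      using coercive[of n b g, OF bsym psd rec] by blast
    have "t + e \<le> Inf T"
    proof (rule cInf_greatest)
      show "T \<noteq> {}" using xT by auto
      fix r assume "r \<in> T"
      then obtain v where r: "r = qf n a v / nv n v" and v: "nv n v > 0" unfolding T_def by auto
      have "e * nv n v \<le> qf n a v - t * nv n v" using eb[of v] unfolding b_def qf_shift .
      thus "t + e \<le> r" unfolding r using v by (simp add: field_simps)
    qed
    thus ?thesis using e unfolding t_def by simp
  qed
qed

fun U :: "nat \<Rightarrow> real" where
  "U 0 = 1"
| "U (Suc i) = U i * (2 * real i + 1) / (2 * real i + 2)"

definition Cc :: "nat \<Rightarrow> real" where
  "Cc i = 2 / ((2 * real i + 1) * U i)^2"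

definition S :: "nat \<Rightarrow> nat \<Rightarrow> real" where
  "S m i = (\<Sum>j\<in>{i..<m}. Cc j)"

definition X :: "nat \<Rightarrow> nat \<Rightarrow> real" where
  "X m i = U i * S m i"

lemma U_pos: "U i > 0"
  by (induction i) auto

lemma U_sq: "(U i)^2 \<le> 1 / (2 * real i + 1)"
proof (induction i)
  case 0 then show ?case by simp
next
  case (Suc i)
  have "(U (Suc i))^2 = (U i)^2 * ((2 * real i + 1) / (2 * real i + 2))^2"
    by (simp add: power_mult_distrib power_divide)
  also have "\<dots> \<le> 1 / (2 * real i + 1) * ((2 * real i + 1) / (2 * real i + 2))^2"
    by (intro mult_right_mono Suc) auto
  also have "\<dots> \<le> 1 / (2 * real (Suc i) + 1)"
  proof -
    define a where "a = 2 * real i + 1"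
    have a0: "a > 0" unfolding a_def by simp
    have "1 / a * (a / (a + 1))^2 = a / (a + 1)^2"
      using a0 by (simp add: field_simps power2_eq_square)
    also have "\<dots> \<le> 1 / (a + 2)"
    proof -
      have "a * (a + 2) \<le> (a + 1)^2" by (simp add: power2_eq_square algebra_simps)
      moreover have "(a + 1)^2 > 0" "a + 2 > 0" using a0 by auto
      ultimately show ?thesis by (simp add: divide_simps)
    qed
    finally show ?thesis unfolding a_def by (simp add: algebra_simps)
  qed
  finally show ?case .
qed

lemma Cc_ge: "Cc i \<ge> 2 / (2 * real i + 1)"
proof -
  have p: "(U i)^2 > 0" using U_pos[of i] by simp
  have "Cc i = 2 / ((2 * real i + 1)^2 * (U i)^2)" unfolding Cc_def by (simp add: power_mult_distrib)
  also have "\<dots> \<ge> 2 / ((2 * real i + 1)^2 * (1 / (2 * real i + 1)))"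
    by (intro divide_left_mono mult_left_mono U_sq mult_pos_pos p) auto
  also have "2 / ((2 * real i + 1)^2 * (1 / (2 * real i + 1))) = 2 / (2 * real i + 1)"
    by (simp add: power2_eq_square)
  finally show ?thesis .
qed

lemma harm_ln: "(\<Sum>j<m. 2 / (2 * real j + 1)) \<ge> ln (2 * real m + 1)"
proof (induction m)
  case 0 then show ?case by simp
next
  case (Suc m)
  have e: "2 * real (Suc m) + 1 = (2 * real m + 1) * (1 + 2 / (2 * real m + 1))"
    by (simp add: field_simps)
  have "ln (2 * real (Suc m) + 1) = ln (2 * real m + 1) + ln (1 + 2 / (2 * real m + 1))"
  proof -
    have pos: "2 * real m + 1 > 0" "1 + 2 / (2 * real m + 1) > 0" by (auto intro: add_pos_nonneg)
    show ?thesis unfolding e using pos by (simp add: ln_mult)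
  qed
  also have "ln (1 + 2 / (2 * real m + 1)) \<le> 2 / (2 * real m + 1)"
    by (rule ln_add_one_self_le_self) auto
  finally show ?case using Suc by simp
qed

lemma X0_ge: "X m 0 \<ge> ln (2 * real m + 1)"
proof -
  have "X m 0 = (\<Sum>j<m. Cc j)" unfolding X_def S_def by (simp add: atLeast0LessThan)
  also have "\<dots> \<ge> (\<Sum>j<m. 2 / (2 * real j + 1))" by (intro sum_mono Cc_ge)
  finally show ?thesis using harm_ln[of m] by linarith
qed

lemma S_step: "i < m \<Longrightarrow> S m i = Cc i + S m (Suc i)"
  unfolding S_def by (simp add: sum.atLeast_Suc_lessThan)

lemma X_m: "X m m = 0" unfolding X_def S_def by simp

definition Fp :: "nat \<Rightarrow> nat \<Rightarrow> real" where
  "Fp m k = 1 / U k + real k * U k * S m k"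

lemma alg1: fixes a b p s :: real assumes "a > 0" "p > 0" "b > 0" and hb: "b = a + 1"
  shows "(b / 2) * a * (p * (2 / (a * p)^2 + s) - p * a / b * s) = 1 / (p * a / b) + (b / 2) * (p * a / b) * s"
proof -
  have a: "a \<noteq> 0" "b \<noteq> 0" "p \<noteq> 0" using assms by auto
  show ?thesis using a by (simp add: field_simps power2_eq_square) (simp add: hb algebra_simps)
qed

lemma alg2: fixes a b p s x :: real assumes "a > 0" "p > 0" "b > 0" and hb: "b = a + 1" and hx: "x = (a - 1) / 2"
  shows "(1 / (p * a / b) + (b / 2) * (p * a / b) * s) - (1 / p + x * p * (2 / (a * p)^2 + s)) = p * (2 / (a * p)^2 + s) / 2"
proof -
  have a: "a \<noteq> 0" "b \<noteq> 0" "p \<noteq> 0" using assms by auto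
  show ?thesis using a unfolding hx by (simp add: field_simps power2_eq_square) (simp add: hb algebra_simps)
qed

lemma flux: assumes "i < m"
  shows "(real i + 1) * (2 * real i + 1) * (X m i - X m (Suc i)) = Fp m (Suc i)"
proof -
  have p: "U i > 0" by (rule U_pos)
  have h1: "real i + 1 = (2 * real i + 2) / 2" "real (Suc i) = (2 * real i + 2) / 2" by simp_all
  have "(real i + 1) * (2 * real i + 1) * (X m i - X m (Suc i)) =
    ((2 * real i + 2) / 2) * (2 * real i + 1) * (U i * (2 / ((2 * real i + 1) * U i)^2 + S m (Suc i))
       - U i * (2 * real i + 1) / (2 * real i + 2) * S m (Suc i))"
    unfolding X_def S_step[OF assms] Cc_def by (simp only: h1 U.simps)
  also have "\<dots> = 1 / (U i * (2 * real i + 1) / (2 * real i + 2))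
     + ((2 * real i + 2) / 2) * (U i * (2 * real i + 1) / (2 * real i + 2)) * S m (Suc i)"
    by (rule alg1) (use p in auto)
  also have "\<dots> = Fp m (Suc i)" unfolding Fp_def by (simp only: h1 U.simps)
  finally show ?thesis .
qed

lemma flux_diff: assumes "i < m"
  shows "Fp m (Suc i) - Fp m i = X m i / 2"
proof -
  have p: "U i > 0" by (rule U_pos)
  have h1: "real (Suc i) = (2 * real i + 2) / 2" "real i = ((2 * real i + 1) - 1) / 2" by simp_all
  have "Fp m (Suc i) - Fp m i =
    (1 / (U i * (2 * real i + 1) / (2 * real i + 2)) + ((2 * real i + 2) / 2) * (U i * (2 * real i + 1) / (2 * real i + 2)) * S m (Suc i))
    - (1 / U i + real i * U i * (2 / ((2 * real i + 1) * U i)^2 + S m (Suc i)))"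
    unfolding Fp_def S_step[OF assms] Cc_def
    by (simp only: h1(1) U.simps)
  also have "\<dots> = U i * (2 / ((2 * real i + 1) * U i)^2 + S m (Suc i)) / 2"
    by (rule alg2) (use p in auto)
  also have "\<dots> = X m i / 2" unfolding X_def S_step[OF assms] Cc_def ..
  finally show ?thesis .
qed

definition dd :: "nat \<Rightarrow> real" where
  "dd i = 4 * (real i + 1)^2 - 6 * (real i + 1) + 5/2"

definition ee :: "nat \<Rightarrow> real" where
  "ee j = - (real j + 1) * (2 * (real j + 1) - 1)"

lemma Dm_entry: assumes "i < m" "j < m"
  shows "Dmat m $$ (i,j) * y j = (if j = i then dd i * y i else 0) + (if j = Suc i then ee i * y j else 0)
     + (if 0 < i \<and> j = i - 1 then ee j * y j else 0)"
  using assms by (auto simp: Dmat_def Let_def dd_def ee_def)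

lemma Dm_sym: assumes "i < m" "j < m"
  shows "Dmat m $$ (i,j) = Dmat m $$ (j,i)"
  using assms by (auto simp: Dmat_def Let_def)

lemma Dm_carrier: "Dmat m \<in> carrier_mat m m"
  unfolding Dmat_def by simp

lemma row_sum: assumes "i < m"
  shows "(\<Sum>j<m. Dmat m $$ (i,j) * X m j) = dd i * X m i + ee i * X m (Suc i)
     + (if 0 < i then ee (i - 1) * X m (i - 1) else 0)"
proof -
  have "(\<Sum>j<m. Dmat m $$ (i,j) * X m j) = (\<Sum>j<m. (if j = i then dd i * X m i else 0)
     + (if j = Suc i then ee i * X m j else 0) + (if 0 < i \<and> j = i - 1 then ee j * X m j else 0))"
    by (intro sum.cong refl) (use assms in \<open>simp add: Dm_entry\<close>)
  also have "\<dots> = (\<Sum>j<m. (if j = i then dd i * X m i else 0))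
     + (\<Sum>j<m. (if j = Suc i then ee i * X m j else 0)) + (\<Sum>j<m. (if 0 < i \<and> j = i - 1 then ee j * X m j else 0))"
    by (simp add: sum.distrib)
  also have "(\<Sum>j<m. (if j = i then dd i * X m i else 0)) = dd i * X m i"
    using assms by simp
  also have "(\<Sum>j<m. (if j = Suc i then ee i * X m j else 0)) = ee i * X m (Suc i)"
  proof (cases "Suc i < m")
    case True then show ?thesis by simp
  next
    case False
    hence "Suc i = m" using assms by simp
    then show ?thesis using False by (simp add: X_m)
  qed
  also have "(\<Sum>j<m. (if 0 < i \<and> j = i - 1 then ee j * X m j else 0)) = (if 0 < i then ee (i - 1) * X m (i - 1) else 0)"
  proof (cases "0 < i")
    case True
    have "(\<Sum>j<m. (if 0 < i \<and> j = i - 1 then ee j * X m j else 0)) = (\<Sum>j<m. (if j = i - 1 then ee j * X m j else 0))"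
      using True by simp
    also have "\<dots> = ee (i - 1) * X m (i - 1)" using assms by simp
    finally show ?thesis using True by simp
  qed simp
  finally show ?thesis .
qed

lemma row_val: assumes "i < m"
  shows "(\<Sum>j<m. Dmat m $$ (i,j) * X m j) = (if i = 0 then 1 else 0)"
proof -
  have f1: "(real i + 1) * (2 * real i + 1) * (X m i - X m (Suc i)) = Fp m (Suc i)" by (rule flux[OF assms])
  have f2: "Fp m (Suc i) - Fp m i = X m i / 2" by (rule flux_diff[OF assms])
  show ?thesis
  proof (cases "i = 0")
    case True
    have "Fp m 0 = 1" unfolding Fp_def by simp
    then show ?thesis unfolding row_sum[OF assms] using f1 f2 True
      by (simp add: dd_def ee_def algebra_simps)
  next
    case False
    then obtain k where k: "i = Suc k" by (cases i) auto
    have km: "k < m" using assms k by simp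
    have f3: "(real k + 1) * (2 * real k + 1) * (X m k - X m (Suc k)) = Fp m (Suc k)" by (rule flux[OF km])
    show ?thesis unfolding row_sum[OF assms] using f1 f2 f3 k
      by (simp add: dd_def ee_def algebra_simps power2_eq_square)
  qed
qed

lemma qf_X: assumes "m \<ge> 1"
  shows "qf m (\<lambda>i j. Dmat m $$ (i,j)) (X m) = X m 0"
proof -
  have "qf m (\<lambda>i j. Dmat m $$ (i,j)) (X m) = (\<Sum>i<m. X m i * (\<Sum>j<m. Dmat m $$ (i,j) * X m j))"
    unfolding qf_def by (simp add: sum_distrib_left mult_ac)
  also have "\<dots> = (\<Sum>i<m. (if i = 0 then X m i else 0))"
    by (intro sum.cong refl) (simp add: row_val)
  also have "\<dots> = X m 0" using assms by simp
  finally show ?thesis .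
qed

theorem proposition4p5:
  fixes m :: nat
  assumes "m \<ge> 1"
  shows "lambda_min (Dmat m) < 1 / ln (real m + 1/2)"
proof -
  define L where "L = ln (real m + 1/2)"
  have L0: "L > 0" unfolding L_def using assms by simp
  have "L < ln (2 * real m + 1)" unfolding L_def using assms by simp
  also have "\<dots> \<le> X m 0" by (rule X0_ge)
  finally have XL: "L < X m 0" .
  have nvX: "(X m 0)^2 \<le> nv m (X m)" by (rule sq_le_nv) (use assms in simp)
  have "X m 0 * L < X m 0 * X m 0" using XL L0 by (intro mult_strict_left_mono) auto
  also have "\<dots> \<le> nv m (X m)" using nvX by (simp add: power2_eq_square)
  finally have "X m 0 < (1 / L) * nv m (X m)" using L0 by (simp add: field_simps)
  hence "qf m (\<lambda>i j. Dmat m $$ (i,j)) (X m) < (1 / L) * nv m (X m)" using qf_X[OF assms] by simp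
  from exists_eig_below[OF Dm_carrier Dm_sym this]
  obtain t where t: "t < 1 / L" "eigenvalue (Dmat m) t" by blast
  have fin: "finite {l. eigenvalue (Dmat m) l}"
  proof -
    have nz: "char_poly (Dmat m) \<noteq> 0"
      using degree_monic_char_poly[OF Dm_carrier, of m] by auto
    have "{l. eigenvalue (Dmat m) l} = {l. poly (char_poly (Dmat m)) l = 0}"
      using eigenvalue_root_char_poly[OF Dm_carrier] by auto
    thus ?thesis using poly_roots_finite[OF nz] by simp
  qed
  have "lambda_min (Dmat m) \<le> t" unfolding lambda_min_def using fin t(2) by (intro Min_le) auto
  thus ?thesis using t(1) unfolding L_def by simp
qed

end
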